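(* Let $a,b,n$ be positive integers with $b\ge a$ and $n\ge 3b(b+1)/a+3b+7$. Let $k=\left\lceil\frac{2b^2+2b}{a}\right\rceil+2b-4$. Then $$\rho\big(K_{k}\nabla(K_2\cup K_{n-k-2})\big)<n-2\quad\text{and}\quad \rho\big(K_{4b}\nabla(K_2\cup K_{n-4b-2})\big)<n-2.$$
   Context: $\rho(G)$ denotes the spectral radius (largest eigenvalue of the adjacency matrix) of a graph $G$. For graphs $G_1,G_2$, the join $G_1\nabla G_2$ is obtained from the disjoint union $G_1\cup G_2$ by adding all edges between $V(G_1)$ and $V(G_2)$; $K_m$ is the complete graph on $m$ vertices. *)

theory Defs
  imports "Jordan_Normal_Form.Spectral_Radius"
begin

text \<open>A finite simple graph on the vertex set {0..<m}, given as (m, adjacency relation).\<close>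
type_synonym graph = "nat \<times> (nat \<Rightarrow> nat \<Rightarrow> bool)"

definition complete_graph :: "nat \<Rightarrow> graph" where
  "complete_graph m = (m, \<lambda>i j. i < m \<and> j < m \<and> i \<noteq> j)"

definition graph_union :: "graph \<Rightarrow> graph \<Rightarrow> graph" where
  "graph_union G H = (fst G + fst H,
     \<lambda>i j. (i < fst G \<and> j < fst G \<and> snd G i j) \<or>
           (fst G \<le> i \<and> fst G \<le> j \<and> i < fst G + fst H \<and> j < fst G + fst H
              \<and> snd H (i - fst G) (j - fst G)))"

definition graph_join :: "graph \<Rightarrow> graph \<Rightarrow> graph" where
  "graph_join G H = (fst G + fst H,
     \<lambda>i j. snd (graph_union G H) i j \<or>
           (i < fst G \<and> fst G \<le> j \<and> j < fst G + fst H) \<or>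
           (j < fst G \<and> fst G \<le> i \<and> i < fst G + fst H))"

definition adjacency_matrix :: "graph \<Rightarrow> complex mat" where
  "adjacency_matrix G = mat (fst G) (fst G) (\<lambda>(i, j). if snd G i j then 1 else 0)"

text \<open>Spectral radius of a graph (= largest adjacency eigenvalue, the matrix being
  nonnegative symmetric).\<close>
definition graph_spectral_radius :: "graph \<Rightarrow> real" where
  "graph_spectral_radius G = spectral_radius (adjacency_matrix G)"

end

theory Submission imports Defs begin

lemma sr_bound:
  fixes A :: "complex mat" and f :: "nat \<Rightarrow> nat \<Rightarrow> real" and x :: "nat \<Rightarrow> real"
  assumes A: "A \<in> carrier_mat N N" and N: "N > 0"
    and Af: "\<And>i j. i < N \<Longrightarrow> j < N \<Longrightarrow> A $$ (i,j) = of_real (f i j)"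
    and f0: "\<And>i j. f i j \<ge> 0"
    and xpos: "\<And>i. i < N \<Longrightarrow> x i > 0"
    and row: "\<And>i. i < N \<Longrightarrow> (\<Sum>j<N. f i j * x j) < t * x i"
  shows "spectral_radius A < t"
proof -
  from spectral_radius_mem_max(1)[OF A N] obtain ev where ev: "ev \<in> spectrum A"
    and sr: "spectral_radius A = norm ev" by auto
  from ev obtain v where v: "eigenvector A v ev" unfolding spectrum_def eigenvalue_def by auto
  hence vc: "v \<in> carrier_vec N" and v0: "v \<noteq> 0\<^sub>v N" and Av: "A *\<^sub>v v = ev \<cdot>\<^sub>v v"
    using A unfolding eigenvector_def by auto
  define g where "g j = norm (v $ j) / x j" for j
  have fin: "finite {..<N}" "{..<N} \<noteq> {}" using N by auto
  obtain i0 where i0: "i0 < N" and i0max: "\<And>j. j < N \<Longrightarrow> g j \<le> g i0"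
  proof -
    have "Max (g ` {..<N}) \<in> g ` {..<N}" using fin by (intro Max_in) auto
    then obtain i0 where "i0 < N" "g i0 = Max (g ` {..<N})" by auto
    moreover have "\<And>j. j < N \<Longrightarrow> g j \<le> Max (g ` {..<N})" by (intro Max_ge) auto
    ultimately show ?thesis using that by metis
  qed
  from v0 vc obtain j0 where j0: "j0 < N" "v $ j0 \<noteq> 0"
    by (metis carrier_vecD eq_vecI index_zero_vec(1) index_zero_vec(2))
  have "g j0 > 0" using j0 xpos[OF j0(1)] unfolding g_def by auto
  hence M: "g i0 > 0" using i0max[OF j0(1)] by auto
  have nvi: "norm (v $ i0) = g i0 * x i0" using xpos[OF i0] unfolding g_def by auto
  have "(A *\<^sub>v v) $ i0 = (\<Sum>j<N. A $$ (i0,j) * v $ j)"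
    using A vc i0 by (simp add: scalar_prod_def lessThan_atLeast0 mult.commute)
  hence eq: "ev * v $ i0 = (\<Sum>j<N. of_real (f i0 j) * v $ j)"
    using Av i0 vc Af[OF i0] by auto
  have "norm ev * (g i0 * x i0) = norm (ev * v $ i0)" by (simp add: norm_mult nvi)
  also have "\<dots> \<le> (\<Sum>j<N. norm (of_real (f i0 j) * v $ j))" unfolding eq by (rule norm_sum)
  also have "\<dots> = (\<Sum>j<N. f i0 j * norm (v $ j))" using f0 by (simp add: norm_mult)
  also have "\<dots> \<le> (\<Sum>j<N. f i0 j * (g i0 * x j))"
  proof (rule sum_mono)
    fix j assume "j \<in> {..<N}"
    hence j: "j < N" by auto
    have "norm (v $ j) = g j * x j" using xpos[OF j] unfolding g_def by auto
    also have "\<dots> \<le> g i0 * x j" using i0max[OF j] xpos[OF j] by (simp add: mult_right_mono)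
    finally show "f i0 j * norm (v $ j) \<le> f i0 j * (g i0 * x j)" using f0 by (simp add: mult_left_mono)
  qed
  also have "\<dots> = g i0 * (\<Sum>j<N. f i0 j * x j)" by (simp add: sum_distrib_left algebra_simps)
  also have "\<dots> < g i0 * (t * x i0)" using row[OF i0] M by simp
  finally have "norm ev * (g i0 * x i0) < t * (g i0 * x i0)" by (simp add: algebra_simps)
  moreover have "g i0 * x i0 > 0" using M xpos[OF i0] by simp
  ultimately show ?thesis unfolding sr using mult_right_less_imp_less by (metis less_le)
qed

lemma adj_char:
  fixes k m :: nat
  assumes "i < k+2+m" "j < k+2+m"
  shows "snd (graph_join (complete_graph k) (graph_union (complete_graph 2) (complete_graph m))) i j
     \<longleftrightarrow> i \<noteq> j \<and> (i < k \<or> j < k \<or> (i < k+2 \<and> j < k+2) \<or> (k+2 \<le> i \<and> k+2 \<le> j))"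
  using assms unfolding graph_join_def graph_union_def complete_graph_def by (simp; presburger)

lemma fst_G: "fst (graph_join (complete_graph k) (graph_union (complete_graph 2) (complete_graph m))) = k+2+m"
  unfolding graph_join_def graph_union_def complete_graph_def by auto

lemma sum_split3:
  fixes f :: "nat \<Rightarrow> real"
  shows "(\<Sum>j<k+2+m. f j) = (\<Sum>j<k. f j) + (\<Sum>j\<in>{k..<k+2}. f j) + (\<Sum>j\<in>{k+2..<k+2+m}. f j)"
proof -
  have "(\<Sum>j<k+2+m. f j) = (\<Sum>j<k+2. f j) + (\<Sum>j\<in>{k+2..<k+2+m}. f j)"
    unfolding lessThan_atLeast0 by (rule sum.atLeastLessThan_concat[symmetric]) auto
  moreover have "(\<Sum>j<k+2. f j) = (\<Sum>j<k. f j) + (\<Sum>j\<in>{k..<k+2}. f j)"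
    unfolding lessThan_atLeast0 by (rule sum.atLeastLessThan_concat[symmetric]) auto
  ultimately show ?thesis by simp
qed

lemma sum_remove_i:
  fixes x :: "nat \<Rightarrow> real"
  assumes "i < N" "Q i"
  shows "(\<Sum>j<N. (if i \<noteq> j \<and> Q j then 1 else 0) * x j) = (\<Sum>j<N. if Q j then x j else 0) - x i"
proof -
  have "(\<Sum>j<N. if Q j then x j else 0) = (if Q i then x i else 0) + (\<Sum>j\<in>{..<N}-{i}. if Q j then x j else 0)"
    using assms by (intro sum.remove) auto
  moreover have "(\<Sum>j<N. (if i \<noteq> j \<and> Q j then 1 else 0) * x j) = 0 + (\<Sum>j\<in>{..<N}-{i}. (if i \<noteq> j \<and> Q j then 1 else 0) * x j)"
    using assms by (subst sum.remove[of _ i]) auto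
  moreover have "(\<Sum>j\<in>{..<N}-{i}. (if i \<noteq> j \<and> Q j then 1 else 0) * x j) = (\<Sum>j\<in>{..<N}-{i}. if Q j then x j else 0)"
    by (intro sum.cong) auto
  moreover have "(if Q i then x i else 0) = x i" using assms by simp
  ultimately show ?thesis by linarith
qed

lemma core:
  fixes k m :: nat
  assumes h: "2 * real k * (real k + 2) + 1 < (real k + real m)^2"
  shows "graph_spectral_radius (graph_join (complete_graph k) (graph_union (complete_graph 2) (complete_graph m)))
     < real k + real m"
proof -
  define G where "G = graph_join (complete_graph k) (graph_union (complete_graph 2) (complete_graph m))"
  define N where "N = k+2+m"
  define t :: real where "t = real k + real m"
  define c :: real where "c = real k + 2"
  define p :: real where "p = (t+1)/2"
  define r :: real where "r = real k + 1"
  define x where "x j = (if j < k then c else if j < k+2 then p else r)" for j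
  define f where "f i j = (if snd G i j then 1 else (0::real))" for i j
  have t0: "t \<ge> 0" unfolding t_def by simp
  have A: "adjacency_matrix G \<in> carrier_mat N N" unfolding adjacency_matrix_def G_def fst_G N_def by simp
  have Af: "\<And>i j. i < N \<Longrightarrow> j < N \<Longrightarrow> adjacency_matrix G $$ (i,j) = of_real (f i j)"
    unfolding adjacency_matrix_def G_def fst_G N_def f_def by auto
  have tot: "\<And>Q :: nat \<Rightarrow> bool. (\<And>j. j < k \<Longrightarrow> Q j = Q 0) \<Longrightarrow> (\<And>j. k \<le> j \<Longrightarrow> j < k+2 \<Longrightarrow> Q j = Q k) \<Longrightarrow>
     (\<And>j. k+2 \<le> j \<Longrightarrow> Q j = Q (k+2)) \<Longrightarrow>
     (\<Sum>j<N. if Q j then x j else 0) = (if Q 0 then real k * c else 0) + (if Q k then 2 * p else 0)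
        + (if Q (k+2) then real m * r else 0)"
  proof -
    fix Q :: "nat \<Rightarrow> bool" assume q1: "\<And>j. j < k \<Longrightarrow> Q j = Q 0" and q2: "\<And>j. k \<le> j \<Longrightarrow> j < k+2 \<Longrightarrow> Q j = Q k"
      and q3: "\<And>j. k+2 \<le> j \<Longrightarrow> Q j = Q (k+2)"
    have s1: "(\<Sum>j<k. if Q j then x j else 0) = (\<Sum>j<k. if Q 0 then c else 0)"
      proof (intro sum.cong refl)
      fix j assume "j \<in> {..<k}"
      hence jj: "j < k" by auto
      have "Q j = Q 0" using q1 jj by blast
      moreover have "x j = c" using jj unfolding x_def by auto
      ultimately show "(if Q j then x j else 0) = (if Q 0 then c else 0)" by simp
    qed
    have s2: "(\<Sum>j\<in>{k..<k+2}. if Q j then x j else 0) = (\<Sum>j\<in>{k..<k+2}. if Q k then p else 0)"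
      proof (intro sum.cong refl)
      fix j assume "j \<in> {k..<k+2}"
      hence jj: "k \<le> j \<and> j < k+2" by auto
      have "Q j = Q k" using q2 jj by blast
      moreover have "x j = p" using jj unfolding x_def by auto
      ultimately show "(if Q j then x j else 0) = (if Q k then p else 0)" by simp
    qed
    have s3: "(\<Sum>j\<in>{k+2..<k+2+m}. if Q j then x j else 0) = (\<Sum>j\<in>{k+2..<k+2+m}. if Q (k+2) then r else 0)"
      proof (intro sum.cong refl)
      fix j assume "j \<in> {k+2..<k+2+m}"
      hence jj: "k+2 \<le> j" by auto
      have "Q j = Q (k+2)" using q3 jj by blast
      moreover have "x j = r" using jj unfolding x_def by auto
      ultimately show "(if Q j then x j else 0) = (if Q (k+2) then r else 0)" by simp
    qed
    show "(\<Sum>j<N. if Q j then x j else 0) = (if Q 0 then real k * c else 0) + (if Q k then 2 * p else 0)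
        + (if Q (k+2) then real m * r else 0)"
      unfolding N_def sum_split3 s1 s2 s3 by simp
  qed
  have row: "(\<Sum>j<N. f i j * x j) < t * x i" if i: "i < N" for i
  proof -
    have fij: "f i j = (if i \<noteq> j \<and> (i < k \<or> j < k \<or> (i < k+2 \<and> j < k+2) \<or> (k+2 \<le> i \<and> k+2 \<le> j)) then 1 else 0)" if "j < N" for j
      using adj_char[of i k m j] i that unfolding f_def G_def N_def by simp
    have e: "(\<Sum>j<N. f i j * x j) = (\<Sum>j<N. (if i \<noteq> j \<and> (i < k \<or> j < k \<or> (i < k+2 \<and> j < k+2) \<or> (k+2 \<le> i \<and> k+2 \<le> j)) then 1 else 0) * x j)"
      by (intro sum.cong) (auto simp: fij)
    consider "i < k" | "k \<le> i" "i < k+2" | "k+2 \<le> i" by linarith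
    then show ?thesis
    proof cases
      case 1
      have "(\<Sum>j<N. f i j * x j) = (\<Sum>j<N. if True then x j else 0) - x i"
        unfolding e using sum_remove_i[of i N "\<lambda>j. True" x] i 1 by simp
      also have "\<dots> = real k * c + 2*p + real m * r - c"
        using tot[of "\<lambda>j. True"] 1 by (simp add: x_def)
      finally show ?thesis using 1 unfolding x_def p_def c_def r_def t_def by (simp add: algebra_simps)
    next
      case 2
      have "(\<Sum>j<N. f i j * x j) = (\<Sum>j<N. if j < k+2 then x j else 0) - x i"
      proof -
        have "(\<Sum>j<N. (if i \<noteq> j \<and> (i < k \<or> j < k \<or> (i < k+2 \<and> j < k+2) \<or> (k+2 \<le> i \<and> k+2 \<le> j)) then 1 else 0) * x j)
            = (\<Sum>j<N. (if i \<noteq> j \<and> (j < k+2) then 1 else 0) * x j)"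
          by (intro sum.cong refl) (use 2 in auto)
        then show ?thesis unfolding e using sum_remove_i[of i N "\<lambda>j. j < k+2" x] i 2 by simp
      qed
      also have "\<dots> = real k * c + 2*p - p"
        using tot[of "\<lambda>j. j < k+2"] 2 by (simp add: x_def)
      finally have eq: "(\<Sum>j<N. f i j * x j) = real k * c + p" by simp
      have "real k * c * 2 < (t - 1) * (t + 1)" using h unfolding c_def t_def by (simp add: power2_eq_square algebra_simps)
      hence "real k * c < (t-1) * p" unfolding p_def by (simp add: field_simps)
      thus ?thesis using eq 2 unfolding x_def by (simp add: algebra_simps)
    next
      case 3
      have "(\<Sum>j<N. f i j * x j) = (\<Sum>j<N. if j < k \<or> k+2 \<le> j then x j else 0) - x i"
      proof -
        have "(\<Sum>j<N. (if i \<noteq> j \<and> (i < k \<or> j < k \<or> (i < k+2 \<and> j < k+2) \<or> (k+2 \<le> i \<and> k+2 \<le> j)) then 1 else 0) * x j)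
            = (\<Sum>j<N. (if i \<noteq> j \<and> (j < k \<or> k+2 \<le> j) then 1 else 0) * x j)"
          by (intro sum.cong refl) (use 3 in auto)
        then show ?thesis unfolding e using sum_remove_i[of i N "\<lambda>j. j < k \<or> k+2 \<le> j" x] i 3 by simp
      qed
      also have "\<dots> = real k * c + real m * r - r"
        using tot[of "\<lambda>j. j < k \<or> k+2 \<le> j"] 3 by (simp add: x_def)
      finally show ?thesis using 3 unfolding x_def c_def r_def t_def by (simp add: algebra_simps)
    qed
  qed
  have xpos: "\<And>i. x i > 0" unfolding x_def c_def p_def r_def using t0 by auto
  have "spectral_radius (adjacency_matrix G) < t"
    by (rule sr_bound[OF A _ Af _ xpos row]) (auto simp: N_def f_def)
  thus ?thesis unfolding graph_spectral_radius_def G_def t_def .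
qed

lemma core2:
  fixes k n :: nat
  assumes h: "3 * (real k + 1) < 2 * (real n - 2)"
  shows "graph_spectral_radius (graph_join (complete_graph k) (graph_union (complete_graph 2) (complete_graph (n - k - 2))))
     < real n - 2"
proof -
  have "real (k + 2) \<le> real n" using h by simp
  hence kn: "k + 2 \<le> n" by linarith
  hence e: "real k + real (n - k - 2) = real n - 2" by (simp add: of_nat_diff)
  have s0: "0 \<le> 3 * (real k + 1)" by simp
  have "(3 * (real k + 1))^2 < (2 * (real n - 2))^2"
    using h s0 by (intro power_strict_mono) auto
  hence "9 * (real k + 1)^2 < 4 * (real n - 2)^2" by (simp only: power_mult_distrib) simp
  moreover have "4 * (2 * real k * (real k + 2) + 1) \<le> 9 * (real k + 1)^2"
    by (simp add: power2_eq_square algebra_simps)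
  ultimately have "4 * (2 * real k * (real k + 2) + 1) < 4 * (real n - 2)^2" by (meson le_less_trans)
  hence "2 * real k * (real k + 2) + 1 < (real n - 2)^2" by simp
  hence "2 * real k * (real k + 2) + 1 < (real k + real (n - k - 2))^2" unfolding e .
  from core[OF this] show ?thesis unfolding e .
qed

theorem lemma2p3:
  fixes a b n k :: nat
  assumes "a > 0" "b > 0" "b \<ge> a"
    and "real n \<ge> 3 * real b * (real b + 1) / real a + 3 * real b + 7"
    and "int k = \<lceil>(2 * real b ^ 2 + 2 * real b) / real a\<rceil> + 2 * int b - 4"
  shows "graph_spectral_radius
           (graph_join (complete_graph k) (graph_union (complete_graph 2) (complete_graph (n - k - 2))))
         < real n - 2 \<and>
         graph_spectral_radius
           (graph_join (complete_graph (4 * b)) (graph_union (complete_graph 2) (complete_graph (n - 4 * b - 2))))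
         < real n - 2"
proof
  define X where "X = (2 * real b ^ 2 + 2 * real b) / real a"
  have a0: "real a > 0" using assms by simp
  have hX: "3 * real b * (real b + 1) / real a = 3 * X / 2"
    unfolding X_def using a0 by (simp add: field_simps power2_eq_square)
  have hn: "real n \<ge> 3 * X / 2 + 3 * real b + 7" using assms(4) hX by simp
  have "real_of_int (int k) = real_of_int \<lceil>X\<rceil> + 2 * real b - 4"
    using assms(5) unfolding X_def by simp
  hence kk: "real k = real_of_int \<lceil>X\<rceil> + 2 * real b - 4" by simp
  have "real_of_int \<lceil>X\<rceil> < X + 1" by linarith
  hence "real k + 1 < X + 2 * real b - 2" using kk by linarith
  hence "3 * (real k + 1) < 2 * (real n - 2)" using hn by argo
  thus "graph_spectral_radius
           (graph_join (complete_graph k) (graph_union (complete_graph 2) (complete_graph (n - k - 2))))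
         < real n - 2" by (rule core2)
  have "real b * (real b + 1) \<ge> real a * (real b + 1)" using assms(3) by (intro mult_right_mono) auto
  hence "real b * (real b + 1) / real a \<ge> real b + 1" using a0 by (simp add: field_simps)
  hence "3 * real b * (real b + 1) / real a \<ge> 3 * real b + 3" by simp
  hence "3 * (real (4*b) + 1) < 2 * (real n - 2)" using assms(4) by simp
  thus "graph_spectral_radius
           (graph_join (complete_graph (4 * b)) (graph_union (complete_graph 2) (complete_graph (n - 4 * b - 2))))
         < real n - 2" by (rule core2)
qed

end
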